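(* Let $\mathrm{X}$ be a reflexive Banach space, let $\ell$ be a Schauder sequence space such that $\ell^*$ is also a Schauder sequence space, and let $F=\{f_i\}\subset\mathrm{X}$, $G=\{g_i\}\subset\mathrm{X}^*$. Then $(G,F)$ is an $(\ell,\ell^* )$-pair Bessel for $\mathrm{X}$ if and only if $(F,G)$ is an $(\ell^*,\ell)$-pair Bessel for $\mathrm{X}^*$, and in this case $S_{FG}^*=S_{GF}$. Likewise, $(G,F)$ is an $(\ell,\ell^* )$-pair frame for $\mathrm{X}$ if and only if $(F,G)$ is an $(\ell^*,\ell)$-pair frame for $\mathrm{X}^*$.
   Context: $\mathrm{X}^{**}$ is identified with $\mathrm{X}$ and $\langle f,g\rangle:=g(f)$. A BK-space is a Banach space of scalar sequences indexed by $\mathbb{N}$ with continuous coordinate functionals; a Schauder sequence space is a BK-space in which the canonical vectors $\delta_i$ form a Schauder basis; then $\ell^*$ is identified isometrically with the sequence space $\{\{\phi(\delta_i)\}:\phi\in\ell^*\}$, acting by $\phi(\{c_i\})=\sum_i\phi(\delta_i)c_i$, and $\ell$ is regarded as a subspace of $\ell^{**}$ in the same way. $G\subset\mathrm{X}^*$ is an $\ell$-Bessel for $\mathrm{X}$ if there is $B>0$ with $\{\langle f,g_i\rangle\}\in\ell$ and $\|\{\langle f,g_i\rangle\}\|_\ell\le B\|f\|$ for all $f\in\mathrm{X}$; $F\subset\mathrm{X}$ is an $\ell^*$-Bessel for $\mathrm{X}^*$ if there is $B>0$ with $\{\langle f_i,g\rangle\}\in\ell^*$ and $\|\{\langle f_i,g\rangle\}\|_{\ell^*}\le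 B\|g\|$ for all $g\in\mathrm{X}^*$. $(G,F)$ is an $(\ell,\ell^* )$-pair Bessel for $\mathrm{X}$ if $G$ is an $\ell$-Bessel for $\mathrm{X}$, $F$ is an $\ell^*$-Bessel for $\mathrm{X}^*$, and $S_{FG}(f)=\sum_i\langle f,g_i\rangle f_i$ converges for every $f\in\mathrm{X}$; it is an $(\ell,\ell^* )$-pair frame if moreover $S_{FG}$ is invertible. $(F,G)$ is an $(\ell^*,\ell)$-pair Bessel for $\mathrm{X}^*$ if $F$ is an $\ell^*$-Bessel for $\mathrm{X}^*$, $G$ is an $\ell$-Bessel for $\mathrm{X}=\mathrm{X}^{**}$, and $S_{GF}(g)=\sum_i\langle f_i,g\rangle g_i$ converges for every $g\in\mathrm{X}^*$; it is an $(\ell^*,\ell)$-pair frame if moreover $S_{GF}$ is invertible. *)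

theory Defs
  imports "HOL-Analysis.Analysis"
begin

text \<open>Scalars are real. Sequences are functions nat => real; a sequence space is a set L of
sequences with a norm function N defined on L.\<close>

definition BK_space :: "(nat \<Rightarrow> real) set \<Rightarrow> ((nat \<Rightarrow> real) \<Rightarrow> real) \<Rightarrow> bool" where
  "BK_space L N \<longleftrightarrow>
     (\<lambda>i. 0) \<in> L \<and>
     (\<forall>x\<in>L. \<forall>y\<in>L. (\<lambda>i. x i + y i) \<in> L) \<and>
     (\<forall>a. \<forall>x\<in>L. (\<lambda>i. a * x i) \<in> L) \<and>
     (\<forall>x\<in>L. 0 \<le> N x) \<and>
     (\<forall>x\<in>L. N x = 0 \<longleftrightarrow> x = (\<lambda>i. 0)) \<and>
     (\<forall>x\<in>L. \<forall>y\<in>L. N (\<lambda>i. x i + y i) \<le> N x + N y) \<and>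
     (\<forall>a. \<forall>x\<in>L. N (\<lambda>i. a * x i) = \<bar>a\<bar> * N x) \<and>
     (\<forall>s. (\<forall>n. s n \<in> L) \<and>
          (\<forall>e>0. \<exists>M. \<forall>m\<ge>M. \<forall>n\<ge>M. N (\<lambda>i. s m i - s n i) < e)
          \<longrightarrow> (\<exists>x\<in>L. (\<lambda>n. N (\<lambda>i. s n i - x i)) \<longlonglongrightarrow> 0)) \<and>
     (\<forall>i. \<exists>K. \<forall>x\<in>L. \<bar>x i\<bar> \<le> K * N x)"

definition delta :: "nat \<Rightarrow> nat \<Rightarrow> real" where
  "delta j = (\<lambda>i. if i = j then 1 else 0)"

text \<open>BK-space in which the canonical vectors form a Schauder basis (the coefficients
are necessarily the coordinates, by continuity of the coordinate functionals).\<close>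
definition Schauder_space :: "(nat \<Rightarrow> real) set \<Rightarrow> ((nat \<Rightarrow> real) \<Rightarrow> real) \<Rightarrow> bool" where
  "Schauder_space L N \<longleftrightarrow> BK_space L N \<and> (\<forall>j. delta j \<in> L) \<and>
     (\<forall>x\<in>L. (\<lambda>n. N (\<lambda>i. x i - (\<Sum>j<n. x j * delta j i))) \<longlonglongrightarrow> 0)"

text \<open>The dual l* identified with the sequences {phi(delta_i)}, acting by
  phi(c) = sum_i phi(delta_i) c_i, with the dual (operator) norm.\<close>
definition dual_set :: "(nat \<Rightarrow> real) set \<Rightarrow> ((nat \<Rightarrow> real) \<Rightarrow> real) \<Rightarrow> (nat \<Rightarrow> real) set" where
  "dual_set L N = {d. (\<forall>x\<in>L. summable (\<lambda>i. d i * x i)) \<and>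
                      (\<exists>B. \<forall>x\<in>L. \<bar>\<Sum>i. d i * x i\<bar> \<le> B * N x)}"

definition dual_norm :: "(nat \<Rightarrow> real) set \<Rightarrow> ((nat \<Rightarrow> real) \<Rightarrow> real) \<Rightarrow> (nat \<Rightarrow> real) \<Rightarrow> real" where
  "dual_norm L N d = (SUP x\<in>{x\<in>L. N x \<le> 1}. \<bar>\<Sum>i. d i * x i\<bar>)"

definition reflexive_space :: "'x::real_normed_vector itself \<Rightarrow> bool" where
  "reflexive_space _ \<longleftrightarrow>
     (\<forall>\<Phi> :: ('x \<Rightarrow>\<^sub>L real) \<Rightarrow>\<^sub>L real. \<exists>x::'x. \<forall>g. blinfun_apply \<Phi> g = blinfun_apply g x)"

definition ell_Bessel :: "(nat \<Rightarrow> real) set \<Rightarrow> ((nat \<Rightarrow> real) \<Rightarrow> real)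
    \<Rightarrow> (nat \<Rightarrow> ('x::real_normed_vector \<Rightarrow>\<^sub>L real)) \<Rightarrow> bool" where
  "ell_Bessel L N g \<longleftrightarrow> (\<exists>B>0. \<forall>x::'x. (\<lambda>i. blinfun_apply (g i) x) \<in> L \<and> N (\<lambda>i. blinfun_apply (g i) x) \<le> B * norm x)"

definition dual_ell_Bessel :: "(nat \<Rightarrow> real) set \<Rightarrow> ((nat \<Rightarrow> real) \<Rightarrow> real)
    \<Rightarrow> (nat \<Rightarrow> 'x::real_normed_vector) \<Rightarrow> bool" where
  "dual_ell_Bessel L N f \<longleftrightarrow> (\<exists>B>0. \<forall>h :: 'x \<Rightarrow>\<^sub>L real.
      (\<lambda>i. blinfun_apply h (f i)) \<in> dual_set L N \<and> dual_norm L N (\<lambda>i. blinfun_apply h (f i)) \<le> B * norm h)"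

definition S_FG :: "(nat \<Rightarrow> 'x::real_normed_vector) \<Rightarrow> (nat \<Rightarrow> ('x \<Rightarrow>\<^sub>L real)) \<Rightarrow> 'x \<Rightarrow> 'x" where
  "S_FG f g = (\<lambda>x. \<Sum>i. blinfun_apply (g i) x *\<^sub>R f i)"

definition S_GF :: "(nat \<Rightarrow> 'x::real_normed_vector) \<Rightarrow> (nat \<Rightarrow> ('x \<Rightarrow>\<^sub>L real))
    \<Rightarrow> ('x \<Rightarrow>\<^sub>L real) \<Rightarrow> ('x \<Rightarrow>\<^sub>L real)" where
  "S_GF f g = (\<lambda>h. \<Sum>i. blinfun_apply h (f i) *\<^sub>R g i)"

definition pair_Bessel :: "(nat \<Rightarrow> real) set \<Rightarrow> ((nat \<Rightarrow> real) \<Rightarrow> real)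
    \<Rightarrow> (nat \<Rightarrow> ('x::real_normed_vector \<Rightarrow>\<^sub>L real)) \<Rightarrow> (nat \<Rightarrow> 'x) \<Rightarrow> bool" where
  "pair_Bessel L N g f \<longleftrightarrow> ell_Bessel L N g \<and> dual_ell_Bessel L N f \<and>
     (\<forall>x. summable (\<lambda>i. blinfun_apply (g i) x *\<^sub>R f i))"

text \<open>(F,G) is an (l*,l)-pair Bessel for X* (with X = X**, so the l-Bessel condition on G
  is the one for X)\<close>
definition dual_pair_Bessel :: "(nat \<Rightarrow> real) set \<Rightarrow> ((nat \<Rightarrow> real) \<Rightarrow> real)
    \<Rightarrow> (nat \<Rightarrow> 'x::real_normed_vector) \<Rightarrow> (nat \<Rightarrow> ('x \<Rightarrow>\<^sub>L real)) \<Rightarrow> bool" where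
  "dual_pair_Bessel L N f g \<longleftrightarrow> dual_ell_Bessel L N f \<and> ell_Bessel L N g \<and>
     (\<forall>h :: 'x \<Rightarrow>\<^sub>L real. summable (\<lambda>i. blinfun_apply h (f i) *\<^sub>R g i))"

definition invertible_op :: "('a::real_normed_vector \<Rightarrow> 'a) \<Rightarrow> bool" where
  "invertible_op S \<longleftrightarrow> bounded_linear S \<and>
     (\<exists>T. bounded_linear T \<and> (\<forall>x. T (S x) = x) \<and> (\<forall>y. S (T y) = y))"

definition pair_frame :: "(nat \<Rightarrow> real) set \<Rightarrow> ((nat \<Rightarrow> real) \<Rightarrow> real)
    \<Rightarrow> (nat \<Rightarrow> ('x::real_normed_vector \<Rightarrow>\<^sub>L real)) \<Rightarrow> (nat \<Rightarrow> 'x) \<Rightarrow> bool" where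
  "pair_frame L N g f \<longleftrightarrow> pair_Bessel L N g f \<and> invertible_op (S_FG f g)"

definition dual_pair_frame :: "(nat \<Rightarrow> real) set \<Rightarrow> ((nat \<Rightarrow> real) \<Rightarrow> real)
    \<Rightarrow> (nat \<Rightarrow> 'x::real_normed_vector) \<Rightarrow> (nat \<Rightarrow> ('x \<Rightarrow>\<^sub>L real)) \<Rightarrow> bool" where
  "dual_pair_frame L N f g \<longleftrightarrow> dual_pair_Bessel L N f g \<and> invertible_op (S_GF f g)"

end

theory Submission
  imports Defs
begin


definition HBgood :: "'x::real_normed_vector \<Rightarrow> ('x \<times> real) set \<Rightarrow> bool" where
  "HBgood x G \<longleftrightarrow> (x, norm x) \<in> G \<and> (0,0) \<in> G
     \<and> (\<forall>v r w s. (v,r) \<in> G \<longrightarrow> (w,s) \<in> G \<longrightarrow> (v + w, r + s) \<in> G)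
     \<and> (\<forall>a v r. (v,r) \<in> G \<longrightarrow> (a *\<^sub>R v, a * r) \<in> G)
     \<and> (\<forall>v r. (v,r) \<in> G \<longrightarrow> r \<le> norm v)"

lemma HB_base: "HBgood x {(t *\<^sub>R x, t * norm x) | t. True}"
proof -
  have 1: "(x, norm x) \<in> {(t *\<^sub>R x, t * norm x) | t. True}" by (rule CollectI, rule exI[of _ 1]) simp
  have 2: "(0,0) \<in> {(t *\<^sub>R x, t * norm x) | t. True}" by (rule CollectI, rule exI[of _ 0]) simp
  show ?thesis unfolding HBgood_def
  proof (intro conjI 1 2 allI impI)
    fix v r w s assume "(v,r) \<in> {(t *\<^sub>R x, t * norm x) | t. True}" "(w,s) \<in> {(t *\<^sub>R x, t * norm x) | t. True}"
    then obtain t u where "v = t *\<^sub>R x" "r = t * norm x" "w = u *\<^sub>R x" "s = u * norm x" by auto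
    then show "(v + w, r + s) \<in> {(t *\<^sub>R x, t * norm x) | t. True}"
      by (intro CollectI exI[of _ "t+u"]) (simp add: scaleR_left_distrib distrib_right)
  next
    fix a v r assume "(v,r) \<in> {(t *\<^sub>R x, t * norm x) | t. True}"
    then obtain t where "v = t *\<^sub>R x" "r = t * norm x" by auto
    then show "(a *\<^sub>R v, a * r) \<in> {(t *\<^sub>R x, t * norm x) | t. True}"
      by (intro CollectI exI[of _ "a*t"]) simp
  next
    fix v r assume "(v,r) \<in> {(t *\<^sub>R x, t * norm x) | t. True}"
    then obtain t where "v = t *\<^sub>R x" "r = t * norm x" by auto
    then show "r \<le> norm v" by (simp add: mult_right_mono)
  qed
qed

lemma HB_chain:
  assumes C: "C \<in> chains {G. HBgood x G}" and ne: "C \<noteq> {}"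
  shows "HBgood x (\<Union>C)"
proof -
  have sub: "\<And>G. G \<in> C \<Longrightarrow> HBgood x G" using C by (auto simp: chains_def)
  have ch: "\<And>G H. G \<in> C \<Longrightarrow> H \<in> C \<Longrightarrow> G \<subseteq> H \<or> H \<subseteq> G" using C by (auto simp: chains_def chain_subset_def)
  obtain G0 where G0: "G0 \<in> C" using ne by auto
  show ?thesis unfolding HBgood_def
  proof (intro conjI allI impI)
    show "(x, norm x) \<in> \<Union>C" using G0 sub[OF G0] by (auto simp: HBgood_def)
    show "(0,0) \<in> \<Union>C" using G0 sub[OF G0] by (auto simp: HBgood_def)
  next
    fix v r w s assume a: "(v,r) \<in> \<Union>C" "(w,s) \<in> \<Union>C"
    then obtain G H where GH: "G \<in> C" "H \<in> C" "(v,r) \<in> G" "(w,s) \<in> H" by auto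
    show "(v + w, r + s) \<in> \<Union>C"
    proof (cases "G \<subseteq> H")
      case True then have "(v + w, r + s) \<in> H" using GH sub[of H] by (auto simp: HBgood_def)
      then show ?thesis using GH by blast
    next
      case False then have "H \<subseteq> G" using ch GH by blast
      then have "(v + w, r + s) \<in> G" using GH sub[of G] by (auto simp: HBgood_def)
      then show ?thesis using GH by blast
    qed
  next
    fix a v r assume "(v,r) \<in> \<Union>C"
    then obtain G where "G \<in> C" "(v,r) \<in> G" by auto
    then have "(a *\<^sub>R v, a * r) \<in> G" using sub[of G] by (auto simp: HBgood_def)
    then show "(a *\<^sub>R v, a * r) \<in> \<Union>C" using \<open>G \<in> C\<close> by blast
  next
    fix v r assume "(v,r) \<in> \<Union>C"
    then obtain G where "G \<in> C" "(v,r) \<in> G" by auto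
    then show "r \<le> norm v" using sub[of G] by (auto simp: HBgood_def)
  qed
qed

lemma HB_extend:
  assumes M: "HBgood x M" and y: "\<forall>r. (y, r) \<notin> M"
  shows "\<exists>M'. HBgood x M' \<and> M \<subseteq> M' \<and> M' \<noteq> M"
proof -
  have add: "\<And>v r w s. (v,r) \<in> M \<Longrightarrow> (w,s) \<in> M \<Longrightarrow> (v + w, r + s) \<in> M"
    and sc: "\<And>a v r. (v,r) \<in> M \<Longrightarrow> (a *\<^sub>R v, a * r) \<in> M"
    and dom: "\<And>v r. (v,r) \<in> M \<Longrightarrow> r \<le> norm v"
    and z: "(0,0) \<in> M" and xm: "(x, norm x) \<in> M" using M by (auto simp: HBgood_def)
  define S where "S = {r - norm (u - y) | u r. (u,r) \<in> M}"
  have key: "\<And>u r w s. (u,r) \<in> M \<Longrightarrow> (w,s) \<in> M \<Longrightarrow> r - norm (u - y) \<le> norm (w + y) - s"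
  proof -
    fix u r w s assume "(u,r) \<in> M" "(w,s) \<in> M"
    then have "r + s \<le> norm (u + w)" using add dom by blast
    also have "norm (u + w) \<le> norm (u - y) + norm (w + y)"
      using norm_triangle_ineq[of "u - y" "w + y"] by simp
    finally show "r - norm (u - y) \<le> norm (w + y) - s" by simp
  qed
  define c where "c = Sup S"
  have Sne: "S \<noteq> {}" using z unfolding S_def by blast
  have Sbdd: "bdd_above S" unfolding S_def bdd_above_def
    using key[OF _ z] by auto
  have c1: "\<And>u r. (u,r) \<in> M \<Longrightarrow> r - norm (u - y) \<le> c"
    unfolding c_def by (rule cSup_upper[OF _ Sbdd]) (auto simp: S_def)
  have c2: "\<And>w s. (w,s) \<in> M \<Longrightarrow> c \<le> norm (w + y) - s"
    unfolding c_def by (rule cSup_least[OF Sne]) (auto simp: S_def intro: key)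
  define M' where "M' = {(v + t *\<^sub>R y, r + t * c) | v r t. (v,r) \<in> M}"
  have dom': "r + t * c \<le> norm (v + t *\<^sub>R y)" if vr: "(v,r) \<in> M" for v r t
  proof (cases "t = 0")
    case True then show ?thesis using dom[OF vr] by simp
  next
    case False
    show ?thesis
    proof (cases "t > 0")
      case True
      have "(inverse t *\<^sub>R v, inverse t * r) \<in> M" using sc[OF vr] .
      from c2[OF this] have "c \<le> norm (inverse t *\<^sub>R v + y) - inverse t * r" .
      also have "inverse t *\<^sub>R v + y = inverse t *\<^sub>R (v + t *\<^sub>R y)" using True
        by (simp add: scaleR_add_right)
      also have "norm (inverse t *\<^sub>R (v + t *\<^sub>R y)) = inverse t * norm (v + t *\<^sub>R y)"
        using True by simp
      finally have cc: "c \<le> inverse t * norm (v + t *\<^sub>R y) - inverse t * r" .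
      have "c * t \<le> (inverse t * norm (v + t *\<^sub>R y) - inverse t * r) * t"
        using True cc by (intro mult_right_mono) auto
      also have "\<dots> = norm (v + t *\<^sub>R y) - r" using True by (simp add: field_simps)
      finally show ?thesis by (simp add: mult.commute)
    next
      case False2: False
      then have tn: "t < 0" using False by simp
      define s where "s = - t"
      have sp: "s > 0" using tn s_def by simp
      have "(inverse s *\<^sub>R v, inverse s * r) \<in> M" using sc[OF vr] .
      from c1[OF this] have "inverse s * r - norm (inverse s *\<^sub>R v - y) \<le> c" .
      also have "inverse s *\<^sub>R v - y = inverse s *\<^sub>R (v + t *\<^sub>R y)" using sp s_def
        by (simp add: scaleR_add_right)
      also have "norm (inverse s *\<^sub>R (v + t *\<^sub>R y)) = inverse s * norm (v + t *\<^sub>R y)"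
        using sp by simp
      finally have cc: "inverse s * r - inverse s * norm (v + t *\<^sub>R y) \<le> c" .
      have "(inverse s * r - inverse s * norm (v + t *\<^sub>R y)) * s \<le> c * s"
        using sp cc by (intro mult_right_mono) auto
      moreover have "(inverse s * r - inverse s * norm (v + t *\<^sub>R y)) * s = r - norm (v + t *\<^sub>R y)"
        using sp by (simp add: field_simps)
      ultimately show ?thesis using s_def by (simp add: algebra_simps)
    qed
  qed
  have "HBgood x M'" unfolding HBgood_def
  proof (intro conjI allI impI)
    show "(x, norm x) \<in> M'" unfolding M'_def using xm by force
    show "(0,0) \<in> M'" unfolding M'_def using z by force
  next
    fix v r w s assume "(v,r) \<in> M'" "(w,s) \<in> M'"
    then obtain v1 r1 t1 v2 r2 t2 where e: "(v1,r1) \<in> M" "(v2,r2) \<in> M"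
      "v = v1 + t1 *\<^sub>R y" "r = r1 + t1 * c" "w = v2 + t2 *\<^sub>R y" "s = r2 + t2 * c"
      unfolding M'_def by blast
    have "(v1 + v2, r1 + r2) \<in> M" using add e by blast
    moreover have "v + w = (v1 + v2) + (t1 + t2) *\<^sub>R y" "r + s = (r1 + r2) + (t1 + t2) * c"
      using e by (auto simp: algebra_simps)
    ultimately show "(v + w, r + s) \<in> M'" unfolding M'_def by blast
  next
    fix a v r assume "(v,r) \<in> M'"
    then obtain v1 r1 t1 where e: "(v1,r1) \<in> M" "v = v1 + t1 *\<^sub>R y" "r = r1 + t1 * c"
      unfolding M'_def by auto
    have "(a *\<^sub>R v1, a * r1) \<in> M" using sc e by blast
    moreover have "a *\<^sub>R v = a *\<^sub>R v1 + (a * t1) *\<^sub>R y" "a * r = a * r1 + (a * t1) * c"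
      using e by (auto simp: algebra_simps)
    ultimately show "(a *\<^sub>R v, a * r) \<in> M'" unfolding M'_def by blast
  next
    fix v r assume "(v,r) \<in> M'"
    then obtain v1 r1 t1 where e: "(v1,r1) \<in> M" "v = v1 + t1 *\<^sub>R y" "r = r1 + t1 * c"
      unfolding M'_def by auto
    then show "r \<le> norm v" using dom' by simp
  qed
  moreover have "M \<subseteq> M'"
  proof
    fix p assume "p \<in> M"
    then obtain v r where "p = (v,r)" "(v,r) \<in> M" by (cases p) auto
    then show "p \<in> M'" unfolding M'_def by (intro CollectI exI[of _ v] exI[of _ r] exI[of _ 0]) simp
  qed
  moreover have "(y, c) \<in> M'" unfolding M'_def using z
    by (intro CollectI exI[of _ 0] exI[of _ 0] exI[of _ 1]) simp
  ultimately show ?thesis using y by blast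
qed

lemma Hahn_Banach_norming:
  fixes x :: "'x::real_normed_vector"
  shows "\<exists>h :: 'x \<Rightarrow>\<^sub>L real. norm h \<le> 1 \<and> blinfun_apply h x = norm x"
proof -
  have "\<exists>M\<in>{G. HBgood x G}. \<forall>X\<in>{G. HBgood x G}. M \<subseteq> X \<longrightarrow> X = M"
  proof (rule Zorn_Lemma2, intro ballI)
    fix C assume C: "C \<in> chains {G. HBgood x G}"
    show "\<exists>U\<in>{G. HBgood x G}. \<forall>X\<in>C. X \<subseteq> U"
    proof (cases "C = {}")
      case True then show ?thesis using HB_base by blast
    next
      case False then show ?thesis using HB_chain[OF C] by blast
    qed
  qed
  then obtain M where M: "HBgood x M" and mx: "\<And>X. HBgood x X \<Longrightarrow> M \<subseteq> X \<Longrightarrow> X = M" by blast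
  have add: "\<And>v r w s. (v,r) \<in> M \<Longrightarrow> (w,s) \<in> M \<Longrightarrow> (v + w, r + s) \<in> M"
    and sc: "\<And>a v r. (v,r) \<in> M \<Longrightarrow> (a *\<^sub>R v, a * r) \<in> M"
    and dom: "\<And>v r. (v,r) \<in> M \<Longrightarrow> r \<le> norm v"
    and xm: "(x, norm x) \<in> M" using M by (auto simp: HBgood_def)
  have tot: "\<And>y. \<exists>r. (y,r) \<in> M"
  proof (rule ccontr)
    fix y assume "\<nexists>r. (y, r) \<in> M"
    then obtain M' where "HBgood x M'" "M \<subseteq> M'" "M' \<noteq> M" using HB_extend[OF M] by blast
    then show False using mx by blast
  qed
  have uniq: "r = s" if "(v,r) \<in> M" "(v,s) \<in> M" for v r s
  proof -
    have "((-1) *\<^sub>R v, (-1) * s) \<in> M" using sc that(2) .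
    from add[OF that(1) this] have "(0, r - s) \<in> M" by simp
    from dom[OF this] sc[OF this, of "-1"] dom[OF sc[OF this, of "-1"]] show ?thesis by simp
  qed
  define \<phi> where "\<phi> v = (SOME r. (v,r) \<in> M)" for v
  have phiM: "\<And>v. (v, \<phi> v) \<in> M" unfolding \<phi>_def using tot by (metis someI_ex)
  have phi_eq: "\<And>v r. (v,r) \<in> M \<Longrightarrow> \<phi> v = r" using phiM uniq by blast
  have lin: "linear \<phi>"
  proof (rule linearI)
    fix v w show "\<phi> (v + w) = \<phi> v + \<phi> w" using phi_eq add phiM by blast
  next
    fix a v show "\<phi> (a *\<^sub>R v) = a *\<^sub>R \<phi> v" using phi_eq sc phiM by simp
  qed
  have bnd: "\<bar>\<phi> v\<bar> \<le> norm v" for v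
  proof -
    have "\<phi> v \<le> norm v" using dom phiM by blast
    moreover have "- \<phi> v \<le> norm v" using dom[OF sc[OF phiM, of "-1" v]] by simp
    ultimately show ?thesis by simp
  qed
  have bl: "bounded_linear \<phi>"
  proof (rule bounded_linear_intro)
    show "\<phi> (v + w) = \<phi> v + \<phi> w" for v w using lin by (simp add: linear_add)
    show "\<phi> (a *\<^sub>R v) = a *\<^sub>R \<phi> v" for a v using lin by (simp add: linear_scale)
    show "norm (\<phi> v) \<le> norm v * 1" for v using bnd[of v] by simp
  qed
  show ?thesis
  proof (intro exI conjI)
    show "norm (Blinfun \<phi>) \<le> 1"
      by (rule norm_blinfun_bound) (auto simp: bounded_linear_Blinfun_apply[OF bl] bnd)
    show "blinfun_apply (Blinfun \<phi>) x = norm x"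
      using bounded_linear_Blinfun_apply[OF bl] phi_eq[OF xm] by simp
  qed
qed



definition trunc :: "(nat \<Rightarrow> real) \<Rightarrow> nat \<Rightarrow> nat \<Rightarrow> nat \<Rightarrow> real" where
  "trunc c m n = (\<lambda>i. if m \<le> i \<and> i < n then c i else 0)"

lemma BK_facts:
  assumes "BK_space L N"
  shows BK_zero: "(\<lambda>i. 0) \<in> L"
    and BK_add: "\<And>x y. x \<in> L \<Longrightarrow> y \<in> L \<Longrightarrow> (\<lambda>i. x i + y i) \<in> L"
    and BK_scale: "\<And>a x. x \<in> L \<Longrightarrow> (\<lambda>i. a * x i) \<in> L"
    and BK_nonneg: "\<And>x. x \<in> L \<Longrightarrow> 0 \<le> N x"
    and BK_N0: "\<And>x. x \<in> L \<Longrightarrow> N x = 0 \<longleftrightarrow> x = (\<lambda>i. 0)"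
    and BK_tri: "\<And>x y. x \<in> L \<Longrightarrow> y \<in> L \<Longrightarrow> N (\<lambda>i. x i + y i) \<le> N x + N y"
    and BK_Nscale: "\<And>a x. x \<in> L \<Longrightarrow> N (\<lambda>i. a * x i) = \<bar>a\<bar> * N x"
  using assms unfolding BK_space_def by blast+

lemma partial_in:
  assumes "Schauder_space L N" "c \<in> L"
  shows "(\<lambda>i. \<Sum>j<n. c j * delta j i) \<in> L"
proof (induction n)
  case 0 then show ?case using assms by (simp add: Schauder_space_def BK_space_def)
next
  case (Suc n)
  have bk: "BK_space L N" and d: "delta n \<in> L" using assms by (auto simp: Schauder_space_def)
  have "(\<lambda>i. (\<Sum>j<n. c j * delta j i) + c n * delta n i) \<in> L"
    by (rule BK_add[OF bk Suc BK_scale[OF bk d]])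
  then show ?case by simp
qed

lemma trunc_in:
  assumes S: "Schauder_space L N" and c: "c \<in> L"
  shows "trunc c m n \<in> L"
proof -
  have bk: "BK_space L N" using S by (simp add: Schauder_space_def)
  have "trunc c m n = (\<lambda>i. (\<Sum>j<n. c j * delta j i) + (-1) * (\<Sum>j<m. c j * delta j i))" if "m \<le> n"
  proof
    fix i
    have "(\<Sum>j<n. c j * delta j i) = (if i < n then c i else 0)"
      by (simp add: delta_def if_distrib[of "\<lambda>x. c _ * x"] sum.delta cong: if_cong)
    moreover have "(\<Sum>j<m. c j * delta j i) = (if i < m then c i else 0)"
      by (simp add: delta_def if_distrib[of "\<lambda>x. c _ * x"] sum.delta cong: if_cong)
    ultimately show "trunc c m n i = (\<Sum>j<n. c j * delta j i) + (-1) * (\<Sum>j<m. c j * delta j i)"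
      using that by (auto simp: trunc_def)
  qed
  moreover have "trunc c m n = (\<lambda>i. 0)" if "\<not> m \<le> n" using that by (auto simp: trunc_def)
  ultimately show ?thesis
    using BK_add[OF bk partial_in[OF S c, of n] BK_scale[OF bk partial_in[OF S c, of m], of "-1"]] BK_zero[OF bk]
    by (cases "m \<le> n") auto
qed

lemma trunc_small:
  assumes S: "Schauder_space L N" and c: "c \<in> L" and e: "e > 0"
  shows "\<exists>M. \<forall>m\<ge>M. \<forall>n. N (trunc c m n) < e"
proof -
  have bk: "BK_space L N" using S by (simp add: Schauder_space_def)
  define r where "r n = (\<lambda>i. c i - (\<Sum>j<n. c j * delta j i))" for n
  have rL: "r n \<in> L" for n
    using BK_add[OF bk c BK_scale[OF bk partial_in[OF S c], of "-1"]] by (simp add: r_def)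
  have "(\<lambda>n. N (r n)) \<longlonglongrightarrow> 0" using S c by (simp add: Schauder_space_def r_def)
  then obtain M where M: "\<And>n. n \<ge> M \<Longrightarrow> \<bar>N (r n)\<bar> < e/2"
    using e unfolding LIMSEQ_def dist_real_def by (metis diff_zero half_gt_zero real_norm_def)
  have "N (trunc c m n) < e" if "m \<ge> M" for m n
  proof (cases "m \<le> n")
    case True
    have "trunc c m n = (\<lambda>i. r m i + (-1) * r n i)"
    proof
      fix i
      have "(\<Sum>j<n. c j * delta j i) = (if i < n then c i else 0)"
        by (simp add: delta_def if_distrib[of "\<lambda>x. c _ * x"] sum.delta cong: if_cong)
      moreover have "(\<Sum>j<m. c j * delta j i) = (if i < m then c i else 0)"
        by (simp add: delta_def if_distrib[of "\<lambda>x. c _ * x"] sum.delta cong: if_cong)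
      ultimately show "trunc c m n i = r m i + (-1) * r n i"
        using True by (auto simp: trunc_def r_def)
    qed
    then have "N (trunc c m n) \<le> N (r m) + N (\<lambda>i. (-1) * r n i)"
      using BK_tri[OF bk rL[of m] BK_scale[OF bk rL[of n], of "-1"]] by simp
    also have "\<dots> = N (r m) + N (r n)" using BK_Nscale[OF bk rL, of "-1"] by simp
    also have "\<dots> < e" using M[of m] M[of n] that True by simp
    finally show ?thesis .
  next
    case False
    then have "trunc c m n = (\<lambda>i. 0)" by (auto simp: trunc_def)
    then show ?thesis using BK_N0[OF bk BK_zero[OF bk]] e by simp
  qed
  then show ?thesis by blast
qed

lemma pairing_bound:
  assumes bk: "BK_space L N" and d: "d \<in> dual_set L N" and z: "z \<in> L"
  shows "\<bar>\<Sum>i. d i * z i\<bar> \<le> dual_norm L N d * N z"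
proof -
  have d1: "\<forall>x\<in>L. summable (\<lambda>i. d i * x i)" and d2: "\<exists>B. \<forall>x\<in>L. \<bar>\<Sum>i. d i * x i\<bar> \<le> B * N x"
    using d unfolding dual_set_def by simp_all
  have sm: "\<And>x. x \<in> L \<Longrightarrow> summable (\<lambda>i. d i * x i)" using d1 by blast
  obtain B where B: "\<And>x. x \<in> L \<Longrightarrow> \<bar>\<Sum>i. d i * x i\<bar> \<le> B * N x" using d2 by blast
  have bdd: "bdd_above ((\<lambda>x. \<bar>\<Sum>i. d i * x i\<bar>) ` {x\<in>L. N x \<le> 1})"
  proof (rule bdd_aboveI2)
    fix x assume "x \<in> {x\<in>L. N x \<le> 1}"
    then have "\<bar>\<Sum>i. d i * x i\<bar> \<le> B * N x" "N x \<le> 1" "x \<in> L" using B by auto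
    then show "\<bar>\<Sum>i. d i * x i\<bar> \<le> \<bar>B\<bar>"
    proof -
      have n0: "0 \<le> N x" using BK_nonneg[OF bk] \<open>x \<in> L\<close> by blast
      have "B * N x \<le> \<bar>B\<bar> * N x" by (rule mult_right_mono[OF abs_ge_self n0])
      also have "\<dots> \<le> \<bar>B\<bar>" by (rule mult_left_le[OF \<open>N x \<le> 1\<close>]) simp
      finally show ?thesis using \<open>\<bar>\<Sum>i. d i * x i\<bar> \<le> B * N x\<close> by linarith
    qed
  qed
  show ?thesis
  proof (cases "N z = 0")
    case True
    moreover have "z = (\<lambda>i. 0)" using BK_N0[OF bk z] True by simp
    ultimately show ?thesis by simp
  next
    case False
    then have Np: "N z > 0" using BK_nonneg[OF bk z] by simp
    define w where "w = (\<lambda>i. inverse (N z) * z i)"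
    have wL: "w \<in> L" unfolding w_def by (rule BK_scale[OF bk z])
    have Nw: "N w = 1" unfolding w_def using BK_Nscale[OF bk z] Np by simp
    have "\<bar>\<Sum>i. d i * w i\<bar> \<le> dual_norm L N d"
      unfolding dual_norm_def by (rule cSUP_upper[OF _ bdd]) (use wL Nw in simp)
    moreover have "(\<Sum>i. d i * w i) = inverse (N z) * (\<Sum>i. d i * z i)"
      unfolding w_def using suminf_mult[OF sm[OF z], of "inverse (N z)"]
      by (simp add: algebra_simps)
    ultimately have "inverse (N z) * \<bar>\<Sum>i. d i * z i\<bar> \<le> dual_norm L N d"
      using Np by (simp add: abs_mult)
    then show ?thesis using Np by (simp add: field_simps)
  qed
qed



lemma sumX:
  assumes S: "Schauder_space L N" and gB: "ell_Bessel L N g" and fB: "dual_ell_Bessel L N f"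
  shows "summable (\<lambda>i. blinfun_apply (g i) x *\<^sub>R (f i :: 'x::banach))"
proof -
  have bk: "BK_space L N" using S by (simp add: Schauder_space_def)
  obtain B2 where B2: "B2 > 0" and fb: "\<And>h :: 'x \<Rightarrow>\<^sub>L real. (\<lambda>i. blinfun_apply h (f i)) \<in> dual_set L N \<and>
      dual_norm L N (\<lambda>i. blinfun_apply h (f i)) \<le> B2 * norm h"
    using fB unfolding dual_ell_Bessel_def by blast
  define c where "c = (\<lambda>i. blinfun_apply (g i) x)"
  have cL: "c \<in> L" using gB unfolding ell_Bessel_def c_def by blast
  show ?thesis unfolding summable_Cauchy
  proof (intro allI impI)
    fix e :: real assume e: "e > 0"
    obtain M where M: "\<And>m n. m \<ge> M \<Longrightarrow> N (trunc c m n) < e / B2"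
      using trunc_small[OF S cL, of "e / B2"] e B2 by auto
    have "norm (\<Sum>i\<in>{m..<n}. blinfun_apply (g i) x *\<^sub>R f i) < e" if m: "m \<ge> M" for m n
    proof -
      define v where "v = (\<Sum>i\<in>{m..<n}. blinfun_apply (g i) x *\<^sub>R f i)"
      obtain h :: "'x \<Rightarrow>\<^sub>L real" where h: "norm h \<le> 1" "blinfun_apply h v = norm v"
        using Hahn_Banach_norming by blast
      have "blinfun_apply h v = (\<Sum>i\<in>{m..<n}. blinfun_apply h (f i) * trunc c m n i)"
        unfolding v_def by (simp add: blinfun.sum_right blinfun.scaleR_right trunc_def c_def mult.commute)
      also have "\<dots> = (\<Sum>i. blinfun_apply h (f i) * trunc c m n i)"
        by (rule suminf_finite[symmetric]) (auto simp: trunc_def)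
      finally have "norm v \<le> dual_norm L N (\<lambda>i. blinfun_apply h (f i)) * N (trunc c m n)"
        using h pairing_bound[OF bk conjunct1[OF fb[of h]] trunc_in[OF S cL, of m n]] by simp
      also have "\<dots> \<le> (B2 * norm h) * N (trunc c m n)"
        by (rule mult_right_mono[OF conjunct2[OF fb] BK_nonneg[OF bk trunc_in[OF S cL]]])
      also have "\<dots> \<le> B2 * N (trunc c m n)"
        using h(1) B2 BK_nonneg[OF bk trunc_in[OF S cL, of m n]]
        by (simp add: mult.assoc mult_left_le_one_le)
      also have "\<dots> < e" using M[OF m, of n] B2 by (simp add: field_simps)
      finally show ?thesis unfolding v_def .
    qed
    then show "\<exists>M. \<forall>m\<ge>M. \<forall>n. norm (\<Sum>i\<in>{m..<n}. blinfun_apply (g i) x *\<^sub>R f i) < e" by blast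
  qed
qed

lemma sumD:
  assumes S: "Schauder_space L N" and SD: "Schauder_space (dual_set L N) (dual_norm L N)"
    and gB: "ell_Bessel L N g" and fB: "dual_ell_Bessel L N (f :: nat \<Rightarrow> 'x::banach)"
  shows "summable (\<lambda>i. blinfun_apply h (f i) *\<^sub>R g i)"
proof -
  have bk: "BK_space L N" using S by (simp add: Schauder_space_def)
  have bkD: "BK_space (dual_set L N) (dual_norm L N)" using SD by (simp add: Schauder_space_def)
  obtain B1 where B1: "B1 > 0" and gb: "\<And>x. (\<lambda>i. blinfun_apply (g i) x) \<in> L \<and>
      N (\<lambda>i. blinfun_apply (g i) x) \<le> B1 * norm x"
    using gB unfolding ell_Bessel_def by blast
  define d where "d = (\<lambda>i. blinfun_apply h (f i))"
  have dL: "d \<in> dual_set L N" using fB unfolding dual_ell_Bessel_def d_def by blast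
  show ?thesis unfolding summable_Cauchy
  proof (intro allI impI)
    fix e :: real assume e: "e > 0"
    obtain M where M: "\<And>m n. m \<ge> M \<Longrightarrow> dual_norm L N (trunc d m n) < e / B1"
      using trunc_small[OF SD dL, of "e / B1"] e B1 by auto
    have "norm (\<Sum>i\<in>{m..<n}. blinfun_apply h (f i) *\<^sub>R g i) < e" if m: "m \<ge> M" for m n
    proof -
      have tD: "trunc d m n \<in> dual_set L N" by (rule trunc_in[OF SD dL])
      have "norm (\<Sum>i\<in>{m..<n}. blinfun_apply h (f i) *\<^sub>R g i) \<le> dual_norm L N (trunc d m n) * B1"
      proof (rule norm_blinfun_bound)
        show "0 \<le> dual_norm L N (trunc d m n) * B1" using BK_nonneg[OF bkD tD] B1 by simp
      next
        fix x
        have "blinfun_apply (\<Sum>i\<in>{m..<n}. blinfun_apply h (f i) *\<^sub>R g i) x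
            = (\<Sum>i\<in>{m..<n}. trunc d m n i * blinfun_apply (g i) x)"
          by (simp add: blinfun.sum_left blinfun.scaleR_left trunc_def d_def)
        also have "\<dots> = (\<Sum>i. trunc d m n i * blinfun_apply (g i) x)"
          by (rule suminf_finite[symmetric]) (auto simp: trunc_def)
        finally have "norm (blinfun_apply (\<Sum>i\<in>{m..<n}. blinfun_apply h (f i) *\<^sub>R g i) x)
            \<le> dual_norm L N (trunc d m n) * N (\<lambda>i. blinfun_apply (g i) x)"
          using pairing_bound[OF bk tD conjunct1[OF gb[of x]]] by simp
        also have "\<dots> \<le> dual_norm L N (trunc d m n) * (B1 * norm x)"
          by (rule mult_left_mono[OF conjunct2[OF gb] BK_nonneg[OF bkD tD]])
        finally show "norm (blinfun_apply (\<Sum>i\<in>{m..<n}. blinfun_apply h (f i) *\<^sub>R g i) x)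
            \<le> dual_norm L N (trunc d m n) * B1 * norm x" by (simp add: mult.assoc)
      qed
      also have "\<dots> < e" using M[OF m, of n] B1 by (simp add: field_simps)
      finally show ?thesis .
    qed
    then show "\<exists>M. \<forall>m\<ge>M. \<forall>n. norm (\<Sum>i\<in>{m..<n}. blinfun_apply h (f i) *\<^sub>R g i) < e" by blast
  qed
qed

lemma adj:
  assumes S: "Schauder_space L N" and SD: "Schauder_space (dual_set L N) (dual_norm L N)"
    and gB: "ell_Bessel L N g" and fB: "dual_ell_Bessel L N (f :: nat \<Rightarrow> 'x::banach)"
  shows "blinfun_apply h (S_FG f g x) = blinfun_apply (S_GF f g h) x"
proof -
  have "blinfun_apply h (S_FG f g x) = (\<Sum>i. blinfun_apply h (blinfun_apply (g i) x *\<^sub>R f i))"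
    unfolding S_FG_def by (rule bounded_linear.suminf[OF blinfun.bounded_linear_right sumX[OF S gB fB]])
  also have "\<dots> = (\<Sum>i. blinfun_apply (blinfun_apply h (f i) *\<^sub>R g i) x)"
    by (simp add: blinfun.scaleR_right blinfun.scaleR_left mult.commute)
  also have "\<dots> = blinfun_apply (S_GF f g h) x"
    unfolding S_GF_def by (rule bounded_linear.suminf[OF blinfun.bounded_linear_left sumD[OF S SD gB fB], symmetric])
  finally show ?thesis .
qed

lemma SFG_bl:
  assumes S: "Schauder_space L N" and SD: "Schauder_space (dual_set L N) (dual_norm L N)"
    and gB: "ell_Bessel L N g" and fB: "dual_ell_Bessel L N (f :: nat \<Rightarrow> 'x::banach)"
  shows "bounded_linear (S_FG f g)"
proof -
  have bk: "BK_space L N" using S by (simp add: Schauder_space_def)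
  obtain B1 where B1: "B1 > 0" and gb: "\<And>x. (\<lambda>i. blinfun_apply (g i) x) \<in> L \<and>
      N (\<lambda>i. blinfun_apply (g i) x) \<le> B1 * norm x"
    using gB unfolding ell_Bessel_def by blast
  obtain B2 where B2: "B2 > 0" and fb: "\<And>h :: 'x \<Rightarrow>\<^sub>L real. (\<lambda>i. blinfun_apply h (f i)) \<in> dual_set L N \<and>
      dual_norm L N (\<lambda>i. blinfun_apply h (f i)) \<le> B2 * norm h"
    using fB unfolding dual_ell_Bessel_def by blast
  show ?thesis
  proof (rule bounded_linear_intro)
    fix x y
    show "S_FG f g (x + y) = S_FG f g x + S_FG f g y"
      unfolding S_FG_def using suminf_add[OF sumX[OF S gB fB, of x] sumX[OF S gB fB, of y]]
      by (simp add: blinfun.add_right scaleR_add_left)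
  next
    fix r x
    show "S_FG f g (r *\<^sub>R x) = r *\<^sub>R S_FG f g x"
      unfolding S_FG_def using suminf_scaleR_right[OF sumX[OF S gB fB, of x], of r]
      by (simp add: blinfun.scaleR_right)
  next
    fix x
    obtain h :: "'x \<Rightarrow>\<^sub>L real" where h: "norm h \<le> 1" "blinfun_apply h (S_FG f g x) = norm (S_FG f g x)"
      using Hahn_Banach_norming by blast
    have "blinfun_apply h (S_FG f g x) = (\<Sum>i. blinfun_apply h (blinfun_apply (g i) x *\<^sub>R f i))"
      unfolding S_FG_def by (rule bounded_linear.suminf[OF blinfun.bounded_linear_right sumX[OF S gB fB]])
    also have "\<dots> = (\<Sum>i. blinfun_apply h (f i) * blinfun_apply (g i) x)"
      by (simp add: blinfun.scaleR_right mult.commute)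
    finally have "norm (S_FG f g x) \<le> dual_norm L N (\<lambda>i. blinfun_apply h (f i)) * N (\<lambda>i. blinfun_apply (g i) x)"
      using h pairing_bound[OF bk conjunct1[OF fb[of h]] conjunct1[OF gb[of x]]] by simp
    also have "\<dots> \<le> (B2 * norm h) * (B1 * norm x)"
      using B1 B2 conjunct2[OF fb[of h]] conjunct2[OF gb[of x]] BK_nonneg[OF bk conjunct1[OF gb[of x]]]
      by (intro mult_mono) auto
    also have "\<dots> \<le> B2 * (B1 * norm x)"
      using h(1) B1 B2 by (simp add: mult.assoc mult_left_le_one_le)
    finally show "norm (S_FG f g x) \<le> norm x * (B2 * B1)" by (simp add: algebra_simps)
  qed
qed

lemma sep:
  fixes x y :: "'x::real_normed_vector"
  assumes "\<And>k :: 'x \<Rightarrow>\<^sub>L real. blinfun_apply k x = blinfun_apply k y"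
  shows "x = y"
proof -
  obtain h :: "'x \<Rightarrow>\<^sub>L real" where h: "blinfun_apply h (x - y) = norm (x - y)"
    using Hahn_Banach_norming by blast
  have "blinfun_apply h (x - y) = 0" using assms[of h] by (simp add: blinfun.diff_right)
  then show ?thesis using h by simp
qed

lemma inv_equiv:
  assumes R: "reflexive_space TYPE('x)"
    and S: "Schauder_space L N" and SD: "Schauder_space (dual_set L N) (dual_norm L N)"
    and gB: "ell_Bessel L N g" and fB: "dual_ell_Bessel L N (f :: nat \<Rightarrow> 'x::banach)"
  shows "invertible_op (S_FG f g) \<longleftrightarrow> invertible_op (S_GF f g)"
proof -
  define Sx where "Sx = S_FG f g"
  have bl: "bounded_linear Sx" unfolding Sx_def by (rule SFG_bl[OF S SD gB fB])
  have adj': "\<And>h x. blinfun_apply (S_GF f g h) x = blinfun_apply h (Sx x)"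
    using adj[OF S SD gB fB] unfolding Sx_def by simp
  have Aeq: "S_GF f g = (\<lambda>h. h o\<^sub>L Blinfun Sx)"
  proof
    fix h show "S_GF f g h = h o\<^sub>L Blinfun Sx"
      by (rule blinfun_eqI) (simp only: bounded_linear_Blinfun_apply[OF bl] adj' blinfun_apply_blinfun_compose)
  qed
  have blA: "bounded_linear (S_GF f g)" unfolding Aeq
    by (rule bounded_bilinear.bounded_linear_left[OF bounded_bilinear_blinfun_compose])
  show ?thesis
  proof
    assume "invertible_op (S_FG f g)"
    then obtain T where T: "bounded_linear T" "\<And>x. T (Sx x) = x" "\<And>y. Sx (T y) = y"
      unfolding invertible_op_def Sx_def by blast
    show "invertible_op (S_GF f g)" unfolding invertible_op_def
    proof (intro conjI blA exI[of _ "\<lambda>h. h o\<^sub>L Blinfun T"] allI)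
      show "bounded_linear (\<lambda>h::'x \<Rightarrow>\<^sub>L real. h o\<^sub>L Blinfun T)"
        by (rule bounded_bilinear.bounded_linear_left[OF bounded_bilinear_blinfun_compose])
    next
      fix h :: "'x \<Rightarrow>\<^sub>L real"
      show "S_GF f g h o\<^sub>L Blinfun T = h"
        by (rule blinfun_eqI) (simp add: bounded_linear_Blinfun_apply[OF T(1)] adj' T(3))
      show "S_GF f g (h o\<^sub>L Blinfun T) = h"
        by (rule blinfun_eqI) (simp add: bounded_linear_Blinfun_apply[OF T(1)] adj' T(2))
    qed
  next
    assume "invertible_op (S_GF f g)"
    then obtain Rv where Rv: "bounded_linear Rv" "\<And>h. Rv (S_GF f g h) = h" "\<And>k. S_GF f g (Rv k) = k"
      unfolding invertible_op_def by blast
    have inj: "x1 = x2" if "Sx x1 = Sx x2" for x1 x2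
    proof (rule sep)
      fix k :: "'x \<Rightarrow>\<^sub>L real"
      have "blinfun_apply k x1 = blinfun_apply (S_GF f g (Rv k)) x1" using Rv(3) by simp
      also have "\<dots> = blinfun_apply (Rv k) (Sx x1)" by (rule adj')
      also have "\<dots> = blinfun_apply (Rv k) (Sx x2)" using that by simp
      also have "\<dots> = blinfun_apply (S_GF f g (Rv k)) x2" by (rule adj'[symmetric])
      finally show "blinfun_apply k x1 = blinfun_apply k x2" using Rv(3) by simp
    qed
    have blPhi: "bounded_linear (\<lambda>k. blinfun_apply (Rv k) y)" for y
      by (rule bounded_linear_compose[OF blinfun.bounded_linear_left Rv(1)])
    have surj: "\<exists>x. Sx x = y" for y
    proof -
      have RR: "\<forall>\<Phi> :: ('x \<Rightarrow>\<^sub>L real) \<Rightarrow>\<^sub>L real. \<exists>x::'x. \<forall>g. blinfun_apply \<Phi> g = blinfun_apply g x"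
        using R unfolding reflexive_space_def by simp
      obtain x where x: "\<forall>k. blinfun_apply (Blinfun (\<lambda>k. blinfun_apply (Rv k) y)) k = blinfun_apply k x"
        using spec[OF RR, of "Blinfun (\<lambda>k. blinfun_apply (Rv k) y)"] by (elim exE)
      have x': "\<And>k. blinfun_apply (Rv k) y = blinfun_apply k x"
        using x by (simp add: bounded_linear_Blinfun_apply[OF blPhi])
      have "Sx x = y"
      proof (rule sep)
        fix h :: "'x \<Rightarrow>\<^sub>L real"
        have "blinfun_apply h (Sx x) = blinfun_apply (S_GF f g h) x" by (rule adj'[symmetric])
        also have "\<dots> = blinfun_apply (Rv (S_GF f g h)) y" by (rule x'[symmetric])
        also have "\<dots> = blinfun_apply h y" using Rv(2) by simp
        finally show "blinfun_apply h (Sx x) = blinfun_apply h y" .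
      qed
      then show ?thesis by blast
    qed
    define T where "T y = (SOME x. Sx x = y)" for y
    have ST: "Sx (T y) = y" for y unfolding T_def by (rule someI_ex[OF surj])
    have TS: "T (Sx x) = x" for x by (rule inj) (rule ST)
    obtain K where K: "K > 0" "\<And>k. norm (Rv k) \<le> norm k * K"
      using bounded_linear.pos_bounded[OF Rv(1)] by blast
    have blT: "bounded_linear T"
    proof (rule bounded_linear_intro)
      fix x y show "T (x + y) = T x + T y"
        by (rule inj) (simp add: ST linear_add[OF bounded_linear.linear[OF bl]])
    next
      fix r x show "T (r *\<^sub>R x) = r *\<^sub>R T x"
        by (rule inj) (simp add: ST linear_scale[OF bounded_linear.linear[OF bl]])
    next
      fix y
      obtain k :: "'x \<Rightarrow>\<^sub>L real" where k: "norm k \<le> 1" "blinfun_apply k (T y) = norm (T y)"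
        using Hahn_Banach_norming by blast
      have "blinfun_apply k (T y) = blinfun_apply (S_GF f g (Rv k)) (T y)" using Rv(3) by simp
      also have "\<dots> = blinfun_apply (Rv k) y" by (simp add: adj' ST)
      also have "\<dots> \<le> norm (Rv k) * norm y" using norm_blinfun[of "Rv k" y] by simp
      also have "\<dots> \<le> (norm k * K) * norm y" by (rule mult_right_mono[OF K(2)]) simp
      also have "\<dots> \<le> K * norm y" using k(1) K(1) by (simp add: mult_left_le_one_le mult.assoc)
      finally show "norm (T y) \<le> norm y * K" using k by (simp add: mult.commute)
    qed
    show "invertible_op (S_FG f g)" unfolding invertible_op_def Sx_def[symmetric]
      by (intro conjI bl exI[of _ T] blT allI TS ST)
  qed
qed


theorem mainTheorem6:
  fixes L :: "(nat \<Rightarrow> real) set" and N :: "(nat \<Rightarrow> real) \<Rightarrow> real"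
    and f :: "nat \<Rightarrow> 'x::banach" and g :: "nat \<Rightarrow> ('x \<Rightarrow>\<^sub>L real)"
  assumes "reflexive_space TYPE('x)"
    and "Schauder_space L N"
    and "Schauder_space (dual_set L N) (dual_norm L N)"
  shows "(pair_Bessel L N g f \<longleftrightarrow> dual_pair_Bessel L N f g)
    \<and> (pair_Bessel L N g f \<longrightarrow> (\<forall>h x. blinfun_apply h (S_FG f g x) = blinfun_apply (S_GF f g h) x))
    \<and> (pair_frame L N g f \<longleftrightarrow> dual_pair_frame L N f g)"
proof -
  have eq1: "pair_Bessel L N g f \<longleftrightarrow> dual_pair_Bessel L N f g"
    unfolding pair_Bessel_def dual_pair_Bessel_def
    using sumX[OF assms(2)] sumD[OF assms(2) assms(3)] by blast
  have eq2: "pair_Bessel L N g f \<longrightarrow> (\<forall>h x. blinfun_apply h (S_FG f g x) = blinfun_apply (S_GF f g h) x)"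
    unfolding pair_Bessel_def using adj[OF assms(2) assms(3)] by blast
  have eq3: "pair_frame L N g f \<longleftrightarrow> dual_pair_frame L N f g"
    unfolding pair_frame_def dual_pair_frame_def
    using eq1 inv_equiv[OF assms(1) assms(2) assms(3)] unfolding pair_Bessel_def by blast
  show ?thesis using eq1 eq2 eq3 by blast
qed

end
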